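(* For $\theta>0$ and an integer $n\ge1$, let $K_n(\theta)$ be a random variable with $$P\{K_n(\theta)=k\}=|S_n^k|\frac{\theta^k}{\theta_{(n)}},\quad k=1,\dots,n,$$ where $\theta_{(n)}=\theta(\theta+1)\cdots(\theta+n-1)$ and $|S_n^k|$ is the coefficient of $\theta^k$ in $\theta_{(n)}$, and let $M(t)=E[e^{tK_n(\theta)}]$. Consider the four regimes as $\theta\to\infty$: Case A: $n$ fixed; Case B: $n=n(\theta)\to\infty$ with $\theta/n\to\infty$; Case C: $n=n(\theta)\to\infty$ with $\theta/n\to c\in(0,\infty)$; Case D: $n=n(\theta)\to\infty$ with $\theta/n\to0$. Define $\alpha(\theta)=\log\theta,\ n\log\frac\theta n,\ \theta,\ \theta\log\frac n\theta$ and $\beta(\theta)=\log\theta,\ \log\frac\theta n,\ \frac\theta n,\ 1$ in Cases A, B, C, D respectively. Then for every $t\in\mathbb R$, $$\Lambda(t)=\lim_{\theta\to\infty}\frac{1}{\alpha(\theta)}\log M(\beta(\theta)t)$$ exists and equals, in Cases A, B, C, D respectively, $$\Lambda_1(t)=\begin{cases}nt,&t>-1,\\ (t+1)-n,&\text{else},\end{cases}\qquad \Lambda_2(t)=\begin{cases}t,&t>-1,\\ -1,&\text{else},\end{cases}$$ $$\Lambda_3(t)=\frac1c\Big\{[c\log c-(1+c)\log(1+c)]+[(1+ce^{ct})\log(1+ce^{ct})-ce^{ct}\log(ce^{ct})]\Big\},\qquad \Lambda_4(t)=e^t-1.$$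
   Context: $K_n(\theta)$ is the number of distinct alleles in a random sample of size $n$ from a $PD(\theta)$ population (Ewens sampling formula). *)

theory Defs
  imports "HOL-Analysis.Analysis" "HOL-Combinatorics.Stirling"
begin

text \<open>|S_n^k| is the unsigned Stirling number of the first kind (library: stirling n k),
  i.e. the coefficient of x^k in the rising factorial pochhammer x n.\<close>
definition K_pmf :: "nat \<Rightarrow> real \<Rightarrow> nat \<Rightarrow> real" where
  "K_pmf n \<theta> k = real (stirling n k) * \<theta> ^ k / pochhammer \<theta> n"

definition mgf_K :: "nat \<Rightarrow> real \<Rightarrow> real \<Rightarrow> real" where
  "mgf_K n \<theta> t = (\<Sum>k\<in>{1..n}. K_pmf n \<theta> k * exp (t * real k))"

definition Lambda1 :: "nat \<Rightarrow> real \<Rightarrow> real" where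
  "Lambda1 n t = (if t > -1 then real n * t else (t + 1) - real n)"

definition Lambda2 :: "real \<Rightarrow> real" where
  "Lambda2 t = (if t > -1 then t else -1)"

definition Lambda3 :: "real \<Rightarrow> real \<Rightarrow> real" where
  "Lambda3 c t = (1 / c) *
     ((c * ln c - (1 + c) * ln (1 + c)) +
      ((1 + c * exp (c * t)) * ln (1 + c * exp (c * t)) - c * exp (c * t) * ln (c * exp (c * t))))"

definition Lambda4 :: "real \<Rightarrow> real" where
  "Lambda4 t = exp t - 1"

end

theory Submission
  imports Defs "HOL-Real_Asymp.Real_Asymp"
begin


lemma stirling_n0: "n \<ge> 1 \<Longrightarrow> stirling n 0 = 0"
  by (cases n) auto

lemma mgf_eq:
  assumes "\<theta> > 0" "n \<ge> 1"
  shows "mgf_K n \<theta> u = pochhammer (\<theta> * exp u) n / pochhammer \<theta> n"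
proof -
  have "mgf_K n \<theta> u = (\<Sum>k\<in>{1..n}. real (stirling n k) * (\<theta> * exp u) ^ k) / pochhammer \<theta> n"
    unfolding mgf_K_def K_pmf_def
    by (simp add: sum_divide_distrib power_mult_distrib mult.commute[of u] exp_of_nat_mult mult.assoc)
  also have "(\<Sum>k\<in>{1..n}. real (stirling n k) * (\<theta> * exp u) ^ k) = (\<Sum>k\<le>n. real (stirling n k) * (\<theta> * exp u) ^ k)"
  proof -
    have "{..n} = insert 0 {1..n}" by auto
    then show ?thesis using assms(2) by (simp add: stirling_n0)
  qed
  also have "\<dots> = pochhammer (\<theta> * exp u) n" by (rule stirling_pochhammer)
  finally show ?thesis .
qed

lemma ln_poch: "b > 0 \<Longrightarrow> ln (pochhammer b n) = (\<Sum>j<n. ln (b + real j))"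
  by (simp add: pochhammer_prod ln_prod atLeast0LessThan)

definition Gf :: "real \<Rightarrow> real" where "Gf y = y * ln y - y"

lemma G_step:
  assumes "y > 0"
  shows "ln y \<le> Gf (y+1) - Gf y" "Gf (y+1) - Gf y \<le> ln (y+1)"
proof -
  have a: "ln (y/(y+1)) \<le> y/(y+1) - 1" using assms by (intro ln_le_minus_one) auto
  have b: "ln ((y+1)/y) \<le> (y+1)/y - 1" using assms by (intro ln_le_minus_one) auto
  have a': "ln y - ln (y+1) \<le> - 1/(y+1)" using a assms by (simp add: ln_div field_simps)
  have b': "ln (y+1) - ln y \<le> 1/y" using b assms by (simp add: ln_div field_simps)
  have "(y+1) * (ln (y+1) - ln y) \<ge> 1"
    using a' assms by (simp add: field_simps)
  then show "ln y \<le> Gf (y+1) - Gf y" unfolding Gf_def by (simp add: algebra_simps)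
  have "y * (ln (y+1) - ln y) \<le> 1"
    using b' assms by (simp add: field_simps)
  then show "Gf (y+1) - Gf y \<le> ln (y+1)" unfolding Gf_def by (simp add: algebra_simps)
qed

lemma sum_ln_bounds:
  assumes "b > 0"
  shows "Gf (b + real n) - Gf b - (ln (b + real n) - ln b) \<le> (\<Sum>j<n. ln (b + real j))"
        "(\<Sum>j<n. ln (b + real j)) \<le> Gf (b + real n) - Gf b"
proof -
  have tel: "(\<Sum>j<n. Gf (b + real (Suc j)) - Gf (b + real j)) = Gf (b + real n) - Gf b"
    using sum_lessThan_telescope[of "\<lambda>j. Gf (b + real j)" n] by simp
  have tel2: "(\<Sum>j<n. ln (b + real (Suc j)) - ln (b + real j)) = ln (b + real n) - ln b"
    using sum_lessThan_telescope[of "\<lambda>j. ln (b + real j)" n] by simp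
  have "(\<Sum>j<n. ln (b + real j)) \<le> (\<Sum>j<n. Gf (b + real (Suc j)) - Gf (b + real j))"
  proof (intro sum_mono)
    fix j assume "j \<in> {..<n}"
    show "ln (b + real j) \<le> Gf (b + real (Suc j)) - Gf (b + real j)"
      using G_step(1)[of "b + real j"] assms by (simp add: algebra_simps)
  qed
  then show "(\<Sum>j<n. ln (b + real j)) \<le> Gf (b + real n) - Gf b" using tel by simp
  have "(\<Sum>j<n. (Gf (b + real (Suc j)) - Gf (b + real j)) - (ln (b + real (Suc j)) - ln (b + real j))) \<le> (\<Sum>j<n. ln (b + real j))"
  proof (intro sum_mono)
    fix j assume "j \<in> {..<n}"
    show "(Gf (b + real (Suc j)) - Gf (b + real j)) - (ln (b + real (Suc j)) - ln (b + real j)) \<le> ln (b + real j)"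
      using G_step(2)[of "b + real j"] assms by (simp add: algebra_simps)
  qed
  then show "Gf (b + real n) - Gf b - (ln (b + real n) - ln b) \<le> (\<Sum>j<n. ln (b + real j))"
    using tel tel2 by (simp add: sum_subtractf)
qed

definition Phi :: "real \<Rightarrow> real \<Rightarrow> real" where
  "Phi s m = (s + m) * ln (s + m) - s * ln s - (1 + m) * ln (1 + m)"

lemma G_ident:
  assumes "\<theta> > 0" "s > 0" "m \<ge> 0"
  shows "Gf (\<theta> * (s+m)) - Gf (\<theta> * s) - (Gf (\<theta> * (1+m)) - Gf \<theta>) = \<theta> * Phi s m"
proof -
  have "ln (\<theta> * (s+m)) = ln \<theta> + ln (s+m)" "ln (\<theta> * s) = ln \<theta> + ln s" "ln (\<theta> * (1+m)) = ln \<theta> + ln (1+m)"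
    using assms by (simp_all add: ln_mult)
  then show ?thesis unfolding Gf_def Phi_def by (simp add: algebra_simps)
qed

lemma lnM_sum:
  assumes "\<theta> > 0" "n \<ge> 1"
  shows "ln (mgf_K n \<theta> u) = (\<Sum>j<n. ln (\<theta> * exp u + real j)) - (\<Sum>j<n. ln (\<theta> + real j))"
  using assms pochhammer_pos[of "\<theta> * exp u" n] pochhammer_pos[of \<theta> n]
  by (simp add: mgf_eq ln_div ln_poch)

lemma key:
  assumes "\<theta> > 0" "n \<ge> 1"
  shows "\<bar>ln (mgf_K n \<theta> u) - \<theta> * Phi (exp u) (real n / \<theta>)\<bar> \<le> ln (1 + real n / (\<theta> * exp u)) + ln (1 + real n / \<theta>)"
proof -
  define s where "s = exp u"
  have s: "s > 0" by (simp add: s_def)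
  have ts: "\<theta> * s > 0" using assms s by simp
  have lnM: "ln (mgf_K n \<theta> u) = (\<Sum>j<n. ln (\<theta> * s + real j)) - (\<Sum>j<n. ln (\<theta> + real j))"
    using assms ts pochhammer_pos[of "\<theta> * s" n] pochhammer_pos[of \<theta> n]
    by (simp add: mgf_eq ln_div ln_poch s_def)
  note A = sum_ln_bounds[OF ts, of n] and B = sum_ln_bounds[OF assms(1), of n]
  have e1: "ln (\<theta> * s + real n) - ln (\<theta> * s) = ln (1 + real n / (\<theta> * s))"
  proof -
    have "ln (1 + real n/(\<theta> * s)) = ln ((\<theta> * s + real n)/(\<theta> * s))" using ts by (simp add: add_divide_distrib)
    also have "\<dots> = ln (\<theta> * s + real n) - ln (\<theta> * s)" using ts by (intro ln_divide_pos) auto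
    finally show ?thesis by simp
  qed
  have e2: "ln (\<theta> + real n) - ln \<theta> = ln (1 + real n / \<theta>)"
  proof -
    have "ln (1 + real n/\<theta>) = ln ((\<theta> + real n)/\<theta>)" using assms by (simp add: field_simps)
    also have "\<dots> = ln (\<theta> + real n) - ln \<theta>" using assms by (intro ln_divide_pos) auto
    finally show ?thesis by simp
  qed
  have nn1: "ln (1 + real n / (\<theta> * s)) \<ge> 0" "ln (1 + real n / \<theta>) \<ge> 0"
    using ts assms by auto
  have id: "Gf (\<theta> * s + real n) - Gf (\<theta> * s) - (Gf (\<theta> + real n) - Gf \<theta>) = \<theta> * Phi s (real n / \<theta>)"
  proof -
    have "\<theta> * s + real n = \<theta> * (s + real n/\<theta>)" "\<theta> + real n = \<theta> * (1 + real n/\<theta>)"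
      using assms by (simp_all add: field_simps)
    then show ?thesis using G_ident[OF assms(1) s, of "real n/\<theta>"] assms by simp
  qed
  show ?thesis
    unfolding lnM s_def[symmetric] using A B e1 e2 nn1 id by linarith
qed

lemma squeeze_err:
  fixes f P R :: "'a \<Rightarrow> real"
  assumes "(P \<longlongrightarrow> l) F" "(R \<longlongrightarrow> 0) F" "eventually (\<lambda>x. \<bar>f x - P x\<bar> \<le> R x) F"
  shows "(f \<longlongrightarrow> l) F"
proof -
  have "((\<lambda>x. f x - P x) \<longlongrightarrow> 0) F"
    by (rule Lim_null_comparison[OF _ assms(2)]) (use assms(3) in simp)
  then have "((\<lambda>x. (f x - P x) + P x) \<longlongrightarrow> 0 + l) F" by (intro tendsto_add assms(1))
  then show ?thesis by simp
qed

lemma Lambda3_eq: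
  assumes c: "c > 0"
  shows "Phi (exp (c*t)) (1/c) = Lambda3 c t"
proof -
  define E where "E = exp (c*t)"
  have E: "E > 0" by (simp add: E_def)
  have l1: "ln (E + 1/c) = ln (1 + c*E) - ln c"
  proof -
    have "E + 1/c = (1 + c*E)/c" using c by (simp add: field_simps)
    then show ?thesis using c E by (simp add: ln_divide_pos add_pos_pos)
  qed
  have l2: "ln (1 + 1/c) = ln (1 + c) - ln c"
  proof -
    have "1 + 1/c = (1 + c)/c" using c by (simp add: field_simps)
    then show ?thesis using c by (simp add: ln_divide_pos)
  qed
  have l3: "ln E = c*t" by (simp add: E_def)
  have l4: "ln (c * E) = ln c + c*t" using c E by (simp add: ln_mult l3)
  show ?thesis
    unfolding Phi_def Lambda3_def E_def[symmetric] l1 l2 l3 l4 using c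
    by (simp add: field_simps)
qed

lemma caseC:
  fixes nn :: "real \<Rightarrow> nat"
  assumes c: "c > 0" and nn: "filterlim nn at_top at_top"
    and lim: "((\<lambda>\<theta>. \<theta> / real (nn \<theta>)) \<longlongrightarrow> c) at_top"
  shows "((\<lambda>\<theta>. ln (mgf_K (nn \<theta>) \<theta> (\<theta> / real (nn \<theta>) * t)) / \<theta>) \<longlongrightarrow> Lambda3 c t) at_top"
proof -
  have ev_n: "eventually (\<lambda>\<theta>. nn \<theta> \<ge> 1) at_top" using nn by (simp add: filterlim_at_top)
  have ev_t: "eventually (\<lambda>\<theta>::real. \<theta> > 0) at_top" by (rule eventually_gt_at_top)
  define s where "s \<theta> = exp (\<theta> / real (nn \<theta>) * t)" for \<theta>
  define m where "m \<theta> = real (nn \<theta>) / \<theta>" for \<theta>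
  have s_lim: "(s \<longlongrightarrow> exp (c*t)) at_top" unfolding s_def by (intro tendsto_intros lim)
  have m_lim: "(m \<longlongrightarrow> 1/c) at_top"
  proof -
    have "((\<lambda>\<theta>. inverse (\<theta> / real (nn \<theta>))) \<longlongrightarrow> inverse c) at_top"
      using c by (intro tendsto_intros lim) auto
    then show ?thesis unfolding m_def by (simp add: inverse_eq_divide)
  qed
  have Pl: "((\<lambda>\<theta>. Phi (s \<theta>) (m \<theta>)) \<longlongrightarrow> Phi (exp (c*t)) (1/c)) at_top"
  proof -
    have p1: "exp (c*t) + 1/c > 0" "1 + 1/c > 0" using c by (simp_all add: add_pos_pos)
    show ?thesis unfolding Phi_def using c p1
      by (intro tendsto_intros s_lim m_lim) auto
  qed
  have Rl: "((\<lambda>\<theta>. (ln (1 + m \<theta> / s \<theta>) + ln (1 + m \<theta>)) / \<theta>) \<longlongrightarrow> 0) at_top"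
  proof -
    have "((\<lambda>\<theta>. (ln (1 + m \<theta> / s \<theta>) + ln (1 + m \<theta>)) * inverse \<theta>) \<longlongrightarrow>
        (ln (1 + (1/c)/exp(c*t)) + ln (1+1/c)) * 0) at_top"
    proof -
      have p1: "1 + 1 / (c * exp (c * t)) > 0" "1 + 1/c > 0" using c by (simp_all add: add_pos_pos)
      show ?thesis using c p1 by (intro tendsto_intros s_lim m_lim tendsto_inverse_0_at_top filterlim_ident) auto
    qed
    then show ?thesis by (simp add: divide_inverse)
  qed
  have "eventually (\<lambda>\<theta>. \<bar>ln (mgf_K (nn \<theta>) \<theta> (\<theta> / real (nn \<theta>) * t)) / \<theta> - Phi (s \<theta>) (m \<theta>)\<bar>
      \<le> (ln (1 + m \<theta> / s \<theta>) + ln (1 + m \<theta>)) / \<theta>) at_top"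
    using ev_n ev_t
  proof eventually_elim
    case (elim \<theta>)
    have k: "\<bar>ln (mgf_K (nn \<theta>) \<theta> (\<theta> / real (nn \<theta>) * t)) - \<theta> * Phi (s \<theta>) (m \<theta>)\<bar>
        \<le> ln (1 + m \<theta> / s \<theta>) + ln (1 + m \<theta>)"
      using key[OF elim(2) elim(1), of "\<theta> / real (nn \<theta>) * t"]
      by (simp add: s_def m_def divide_divide_eq_left mult.commute)
    have "\<bar>ln (mgf_K (nn \<theta>) \<theta> (\<theta> / real (nn \<theta>) * t)) / \<theta> - Phi (s \<theta>) (m \<theta>)\<bar>
       = \<bar>ln (mgf_K (nn \<theta>) \<theta> (\<theta> / real (nn \<theta>) * t)) - \<theta> * Phi (s \<theta>) (m \<theta>)\<bar> / \<theta>"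
      using elim(2) by (simp add: field_simps)
    also have "\<dots> \<le> (ln (1 + m \<theta> / s \<theta>) + ln (1 + m \<theta>)) / \<theta>"
      using k elim(2) by (simp add: divide_right_mono)
    finally show ?case .
  qed
  from squeeze_err[OF Pl Rl this] show ?thesis using Lambda3_eq[OF c] by simp
qed

lemma Phi_D_lim: "s > 0 \<Longrightarrow> ((\<lambda>m. Phi s m / ln m) \<longlongrightarrow> s - 1) at_top"
  unfolding Phi_def by real_asymp

lemma ln_ratio_lim: "s > 0 \<Longrightarrow> ((\<lambda>m::real. ln (1 + m / s) / ln m) \<longlongrightarrow> 1) at_top"
  by real_asymp

lemma caseD:
  fixes nn :: "real \<Rightarrow> nat"
  assumes nn: "filterlim nn at_top at_top"
    and lim: "((\<lambda>\<theta>. \<theta> / real (nn \<theta>)) \<longlongrightarrow> 0) at_top"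
  shows "((\<lambda>\<theta>. ln (mgf_K (nn \<theta>) \<theta> t) / (\<theta> * ln (real (nn \<theta>) / \<theta>))) \<longlongrightarrow> Lambda4 t) at_top"
proof -
  have ev_n: "eventually (\<lambda>\<theta>. nn \<theta> \<ge> 1) at_top" using nn by (simp add: filterlim_at_top)
  have ev_t: "eventually (\<lambda>\<theta>::real. \<theta> > 0) at_top" by (rule eventually_gt_at_top)
  define m where "m \<theta> = real (nn \<theta>) / \<theta>" for \<theta>
  have pos: "eventually (\<lambda>\<theta>. \<theta> / real (nn \<theta>) > 0) at_top" using ev_n ev_t by eventually_elim auto
  have "LIM \<theta> at_top. inverse (\<theta> / real (nn \<theta>)) :> at_top"
    by (rule filterlim_inverse_at_top[OF lim pos])
  then have m_top: "filterlim m at_top at_top" by (simp add: m_def[abs_def])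
  have ev_m: "eventually (\<lambda>\<theta>. m \<theta> > 1) at_top" using m_top by (simp add: filterlim_at_top_dense)
  have Pl: "((\<lambda>\<theta>. Phi (exp t) (m \<theta>) / ln (m \<theta>)) \<longlongrightarrow> Lambda4 t) at_top"
    unfolding Lambda4_def by (rule filterlim_compose[OF Phi_D_lim[of "exp t"] m_top]) simp
  have Rl: "((\<lambda>\<theta>. (ln (1 + m \<theta> / exp t) / ln (m \<theta>) + ln (1 + m \<theta> / 1) / ln (m \<theta>)) * inverse \<theta>) \<longlongrightarrow> (1 + 1) * 0) at_top"
    by (intro tendsto_intros filterlim_compose[OF ln_ratio_lim m_top] tendsto_inverse_0_at_top filterlim_ident) auto
  have "eventually (\<lambda>\<theta>. \<bar>ln (mgf_K (nn \<theta>) \<theta> t) / (\<theta> * ln (real (nn \<theta>) / \<theta>)) - Phi (exp t) (m \<theta>) / ln (m \<theta>)\<bar>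
      \<le> (ln (1 + m \<theta> / exp t) / ln (m \<theta>) + ln (1 + m \<theta> / 1) / ln (m \<theta>)) * inverse \<theta>) at_top"
    using ev_n ev_t ev_m
  proof eventually_elim
    case (elim \<theta>)
    have lp: "ln (m \<theta>) > 0" using elim(3) by simp
    have k: "\<bar>ln (mgf_K (nn \<theta>) \<theta> t) - \<theta> * Phi (exp t) (m \<theta>)\<bar>
        \<le> ln (1 + m \<theta> / exp t) + ln (1 + m \<theta>)"
      using key[OF elim(2) elim(1), of t]
      by (simp add: m_def divide_divide_eq_left mult.commute)
    have "\<bar>ln (mgf_K (nn \<theta>) \<theta> t) / (\<theta> * ln (real (nn \<theta>) / \<theta>)) - Phi (exp t) (m \<theta>) / ln (m \<theta>)\<bar>
       = \<bar>ln (mgf_K (nn \<theta>) \<theta> t) - \<theta> * Phi (exp t) (m \<theta>)\<bar> / (\<theta> * ln (m \<theta>))"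
      using elim(2) lp unfolding m_def[symmetric] by (simp add: field_simps)
    also have "\<dots> \<le> (ln (1 + m \<theta> / exp t) + ln (1 + m \<theta>)) / (\<theta> * ln (m \<theta>))"
      using k elim(2) lp by (simp add: divide_right_mono)
    also have "\<dots> = (ln (1 + m \<theta> / exp t) / ln (m \<theta>) + ln (1 + m \<theta> / 1) / ln (m \<theta>)) * inverse \<theta>"
      using elim(2) lp by (simp add: field_simps)
    finally show ?case .
  qed
  from squeeze_err[OF Pl _ this] Rl show ?thesis by simp
qed

lemma q_lim: "((\<lambda>y::real. (1/y + 1) * ln (1 + y)) \<longlongrightarrow> 1) (at_right 0)"
  by real_asymp

lemma exp_neg_right: "e > 0 \<Longrightarrow> filterlim (\<lambda>L::real. exp (-(e*L))) (at_right 0) at_top"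
  by real_asymp

lemma Phi_ident:
  assumes s: "s > 0" and x: "x > 0" and L: "L \<noteq> 0"
  shows "Phi s (x * s) / ((x * s)*L) = ln s / L + ((1/x+1) * ln (1+x) - (1/(x * s) + 1) * ln (1+x * s)) / L"
proof -
  have "ln (s + x * s) = ln s + ln (1+x)"
  proof -
    have "s + x * s = s * (1+x)" by (simp add: algebra_simps)
    then show ?thesis using s x by (simp add: ln_mult)
  qed
  then show ?thesis unfolding Phi_def using s x L by (simp add: field_simps)
qed

lemma psi_lim: "((\<lambda>L. Phi (exp (L*t)) (exp (-L)) / (exp (-L) * L)) \<longlongrightarrow> Lambda2 t) at_top"
proof (cases "t > -1")
  case True
  define e where "e = 1 + t"
  have e: "e > 0" using True by (simp add: e_def)
  define q where "q y = (1/y + 1) * ln (1 + y)" for y :: real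
  have B: "((\<lambda>L. t + (q (exp (-(e*L))) - q (exp (-(1*L)))) * inverse L) \<longlongrightarrow> t + (1 - 1) * 0) at_top"
    unfolding q_def
    by (intro tendsto_intros filterlim_compose[OF q_lim exp_neg_right] e tendsto_inverse_0_at_top filterlim_ident) simp
  have ev: "eventually (\<lambda>L. t + (q (exp (-(e*L))) - q (exp (-(1*L)))) * inverse L
        = Phi (exp (L*t)) (exp (-L)) / (exp (-L) * L)) at_top"
    using eventually_gt_at_top[of 0]
  proof eventually_elim
    case (elim L)
    have xs: "exp (-(e*L)) * exp (L*t) = exp (-L)" by (simp add: mult_exp_exp e_def algebra_simps)
    have "Phi (exp (L*t)) (exp (-L)) / (exp (-L) * L) = Phi (exp (L*t)) (exp (-(e*L)) * exp (L*t)) / ((exp (-(e*L)) * exp (L*t)) * L)"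
      by (simp add: xs)
    also have "\<dots> = ln (exp (L*t)) / L + ((1/exp (-(e*L))+1) * ln (1+exp (-(e*L))) - (1/(exp (-(e*L)) * exp (L*t)) + 1) * ln (1+exp (-(e*L)) * exp (L*t))) / L"
      using elim by (intro Phi_ident) auto
    also have "\<dots> = t + (q (exp (-(e*L))) - q (exp (-(1*L)))) * inverse L"
      using elim by (simp add: xs q_def divide_inverse)
    finally show ?case by simp
  qed
  show ?thesis using tendsto_cong[OF ev] B True by (simp add: Lambda2_def)
next
  case False
  show ?thesis
  proof (cases "t = -1")
    case True
    have "((\<lambda>L::real. Phi (exp (-L)) (exp (-L)) / (exp (-L) * L)) \<longlongrightarrow> - 1) at_top"
      unfolding Phi_def by real_asymp
    then show ?thesis using True by (simp add: Lambda2_def)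
  next
    case False2: False
    define e where "e = -1 - t"
    have e: "e > 0" using False False2 by (simp add: e_def)
    have eq: "exp (L*t) = exp (-(e*L)) * exp (-L)" for L
      by (simp add: mult_exp_exp e_def algebra_simps)
    have "((\<lambda>L::real. Phi (exp (-(e*L)) * exp (-L)) (exp (-L)) / (exp (-L) * L)) \<longlongrightarrow> - 1) at_top"
      using e unfolding Phi_def by real_asymp
    then show ?thesis using False by (simp add: Lambda2_def eq)
  qed
qed

lemma ln1exp: "ln (1 + exp (z::real)) \<le> ln 2 + \<bar>z\<bar>"
proof -
  have "1 + exp z \<le> 2 * exp \<bar>z\<bar>"
      proof -
    have "1 \<le> exp \<bar>z\<bar>" by simp
    moreover have "exp z \<le> exp \<bar>z\<bar>" by simp
    ultimately show ?thesis by linarith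
  qed
  then have "ln (1 + exp z) \<le> ln (2 * exp \<bar>z\<bar>)" by (simp add: add_pos_pos)
  also have "\<dots> = ln 2 + \<bar>z\<bar>" by (simp add: ln_mult)
  finally show ?thesis .
qed

lemma caseB:
  fixes nn :: "real \<Rightarrow> nat"
  assumes nn: "filterlim nn at_top at_top"
    and lim: "filterlim (\<lambda>\<theta>. \<theta> / real (nn \<theta>)) at_top at_top"
  shows "((\<lambda>\<theta>. ln (mgf_K (nn \<theta>) \<theta> (ln (\<theta> / real (nn \<theta>)) * t))
              / (real (nn \<theta>) * ln (\<theta> / real (nn \<theta>)))) \<longlongrightarrow> Lambda2 t) at_top"
proof -
  have ev_n: "eventually (\<lambda>\<theta>. nn \<theta> \<ge> 1) at_top" using nn by (simp add: filterlim_at_top)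
  have ev_t: "eventually (\<lambda>\<theta>::real. \<theta> > 0) at_top" by (rule eventually_gt_at_top)
  define L where "L \<theta> = ln (\<theta> / real (nn \<theta>))" for \<theta>
  have L_top: "filterlim L at_top at_top"
    unfolding L_def[abs_def] by (rule filterlim_compose[OF ln_at_top lim])
  have ev_L: "eventually (\<lambda>\<theta>. L \<theta> \<ge> 1) at_top" using L_top by (simp add: filterlim_at_top)
  define K where "K = 2 * ln 2 + \<bar>1+t\<bar> + 1"
  have Pl: "((\<lambda>\<theta>. Phi (exp (L \<theta> * t)) (exp (- L \<theta>)) / (exp (- L \<theta>) * L \<theta>)) \<longlongrightarrow> Lambda2 t) at_top"
    by (rule filterlim_compose[OF psi_lim L_top])
  have nreal: "filterlim (\<lambda>\<theta>. real (nn \<theta>)) at_top at_top"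
    by (rule filterlim_compose[OF filterlim_real_sequentially nn])
  have Rl: "((\<lambda>\<theta>. K * inverse (real (nn \<theta>))) \<longlongrightarrow> K * 0) at_top"
    by (intro tendsto_intros tendsto_inverse_0_at_top nreal)
  have "eventually (\<lambda>\<theta>. \<bar>ln (mgf_K (nn \<theta>) \<theta> (ln (\<theta> / real (nn \<theta>)) * t))
              / (real (nn \<theta>) * ln (\<theta> / real (nn \<theta>))) - Phi (exp (L \<theta> * t)) (exp (- L \<theta>)) / (exp (- L \<theta>) * L \<theta>)\<bar>
        \<le> K * inverse (real (nn \<theta>))) at_top"
    using ev_n ev_t ev_L
  proof eventually_elim
    case (elim \<theta>)
    define n where "n = real (nn \<theta>)"
    define l where "l = L \<theta>"
    have n: "n \<ge> 1" using elim(1) by (simp add: n_def)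
    have th: "\<theta> > 0" using elim(2) .
    have l: "l \<ge> 1" using elim(3) by (simp add: l_def)
    have em: "exp (- l) = n / \<theta>"
      using n th by (simp add: l_def L_def n_def exp_minus)
    have ex: "n / (\<theta> * exp (l * t)) = exp (- ((1+t) * l))"
    proof -
      have "exp (- ((1+t) * l)) = exp (-l) / exp (l*t)"
        by (simp add: exp_diff[symmetric] algebra_simps)
      then show ?thesis using em by simp
    qed
    have k: "\<bar>ln (mgf_K (nn \<theta>) \<theta> (l * t)) - \<theta> * Phi (exp (l * t)) (exp (-l))\<bar>
        \<le> ln (1 + exp (- ((1+t) * l))) + ln (1 + exp (-l))"
      using key[OF th elim(1), of "l * t"] em ex by (simp add: n_def)
    have b: "ln (1 + exp (- ((1+t) * l))) + ln (1 + exp (-l)) \<le> K * l"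
    proof -
      have "ln (1 + exp (- ((1+t) * l))) \<le> ln 2 + \<bar>1+t\<bar> * l"
        using ln1exp[of "- ((1+t) * l)"] l by (simp add: abs_mult)
      moreover have "ln (1 + exp (-l)) \<le> ln 2 + l" using ln1exp[of "-l"] l by simp
      moreover have "2 * ln 2 \<le> 2 * ln 2 * l" using l by (simp add: mult_le_cancel_left1)
      moreover have "K * l = 2 * ln 2 * l + \<bar>1+t\<bar> * l + l" by (simp add: K_def algebra_simps)
      ultimately show ?thesis by linarith
    qed
    have psi: "Phi (exp (l * t)) (exp (- l)) / (exp (- l) * l) = \<theta> * Phi (exp (l * t)) (exp (- l)) / (n * l)"
      using em th n l by (simp add: field_simps)
    have "\<bar>ln (mgf_K (nn \<theta>) \<theta> (l * t)) / (n * l) - Phi (exp (l * t)) (exp (- l)) / (exp (- l) * l)\<bar>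
        = \<bar>ln (mgf_K (nn \<theta>) \<theta> (l * t)) - \<theta> * Phi (exp (l * t)) (exp (-l))\<bar> / (n * l)"
      unfolding psi using n l by (simp add: field_simps)
    also have "\<dots> \<le> K * l / (n * l)"
      using k b n l by (intro divide_right_mono) auto
    also have "\<dots> = K * inverse n" using n l by (simp add: field_simps)
    finally show ?case by (simp add: n_def l_def L_def)
  qed
  from squeeze_err[OF Pl _ this] Rl show ?thesis by simp
qed

lemma term_lim:
  fixes a c :: real
  assumes c: "c \<ge> 0"
  shows "((\<lambda>x. ln (x powr a + c) / ln x) \<longlongrightarrow> (if c = 0 then a else max a 0)) at_top"
proof (cases "c = 0")
  case True
  have "eventually (\<lambda>x::real. a = ln (x powr a + c) / ln x) at_top"
    using eventually_gt_at_top[of 1] by eventually_elim (simp add: True ln_powr)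
  then show ?thesis using True by (simp add: tendsto_cong[symmetric])
next
  case False
  then have c: "c > 0" using c by simp
  consider "a > 0" | "a = 0" | "a < 0" by linarith
  then show ?thesis
  proof cases
    case 1
    have "((\<lambda>x. ln (x powr a + c) / ln x) \<longlongrightarrow> a) at_top" using 1 c by real_asymp
    then show ?thesis using 1 False by simp
  next
    case 2
    have "((\<lambda>x::real. ln (1 + c) / ln x) \<longlongrightarrow> 0) at_top" by real_asymp
    moreover have "eventually (\<lambda>x::real. ln (1 + c) / ln x = ln (x powr a + c) / ln x) at_top"
      using eventually_gt_at_top[of 1] by eventually_elim (simp add: 2 add.commute)
    ultimately show ?thesis using 2 False by (simp add: tendsto_cong)
  next
    case 3
    have "((\<lambda>x. ln (x powr a + c) / ln x) \<longlongrightarrow> 0) at_top" using 3 c by real_asymp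
    then show ?thesis using 3 False by simp
  qed
qed

lemma caseA:
  assumes n: "n \<ge> 1"
  shows "((\<lambda>\<theta>. ln (mgf_K n \<theta> (ln \<theta> * t)) / ln \<theta>) \<longlongrightarrow> Lambda1 n t) at_top"
proof -
  define f where "f j = (if real j = 0 then 1 + t else max (1+t) 0) - (if real j = 0 then 1 else max 1 0)" for j :: nat
  have lim: "((\<lambda>\<theta>. \<Sum>j<n. ln (\<theta> powr (1+t) + real j) / ln \<theta> - ln (\<theta> powr 1 + real j) / ln \<theta>) \<longlongrightarrow> (\<Sum>j<n. f j)) at_top"
    unfolding f_def by (intro tendsto_sum tendsto_diff term_lim) auto
  have ev: "eventually (\<lambda>\<theta>. (\<Sum>j<n. ln (\<theta> powr (1+t) + real j) / ln \<theta> - ln (\<theta> powr 1 + real j) / ln \<theta>)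
      = ln (mgf_K n \<theta> (ln \<theta> * t)) / ln \<theta>) at_top"
    using eventually_gt_at_top[of 1]
  proof eventually_elim
    case (elim \<theta>)
    have "\<theta> powr (1+t) = exp ((1+t) * ln \<theta>)" using elim by (simp add: powr_def)
    also have "\<dots> = exp (ln \<theta>) * exp (ln \<theta> * t)" by (simp add: exp_add[symmetric] algebra_simps)
    also have "\<dots> = \<theta> * exp (ln \<theta> * t)" using elim by simp
    finally have "\<theta> * exp (ln \<theta> * t) = \<theta> powr (1+t)" by simp
    then show ?case using lnM_sum[of \<theta> n "ln \<theta> * t"] elim n
      by (simp add: sum_divide_distrib sum_subtractf diff_divide_distrib)
  qed
  have "(\<Sum>j<n. f j) = Lambda1 n t"
  proof -
    obtain k where k: "n = Suc k" using n by (cases n) auto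
    have "(\<Sum>j<n. f j) = f 0 + (\<Sum>i<k. f (Suc i))" unfolding k by (rule sum.lessThan_Suc_shift)
    also have "\<dots> = t + real k * (max (1+t) 0 - 1)" by (simp add: f_def)
    finally show ?thesis unfolding Lambda1_def k by (auto simp: max_def algebra_simps)
  qed
  with tendsto_cong[OF ev] lim show ?thesis by simp
qed


theorem theorem4p1:
  shows
  "(\<forall>(n::nat) (t::real). n \<ge> 1 \<longrightarrow>
      ((\<lambda>\<theta>. ln (mgf_K n \<theta> (ln \<theta> * t)) / ln \<theta>) \<longlongrightarrow> Lambda1 n t) at_top)
   \<and>
   (\<forall>(nn::real \<Rightarrow> nat) (t::real).
      filterlim nn at_top at_top \<and> filterlim (\<lambda>\<theta>. \<theta> / real (nn \<theta>)) at_top at_top \<longrightarrow>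
      ((\<lambda>\<theta>. ln (mgf_K (nn \<theta>) \<theta> (ln (\<theta> / real (nn \<theta>)) * t))
              / (real (nn \<theta>) * ln (\<theta> / real (nn \<theta>)))) \<longlongrightarrow> Lambda2 t) at_top)
   \<and>
   (\<forall>(nn::real \<Rightarrow> nat) (c::real) (t::real).
      c > 0 \<and> filterlim nn at_top at_top \<and> ((\<lambda>\<theta>. \<theta> / real (nn \<theta>)) \<longlongrightarrow> c) at_top \<longrightarrow>
      ((\<lambda>\<theta>. ln (mgf_K (nn \<theta>) \<theta> (\<theta> / real (nn \<theta>) * t)) / \<theta>) \<longlongrightarrow> Lambda3 c t) at_top)
   \<and>
   (\<forall>(nn::real \<Rightarrow> nat) (t::real).
      filterlim nn at_top at_top \<and> ((\<lambda>\<theta>. \<theta> / real (nn \<theta>)) \<longlongrightarrow> 0) at_top \<longrightarrow>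
      ((\<lambda>\<theta>. ln (mgf_K (nn \<theta>) \<theta> t) / (\<theta> * ln (real (nn \<theta>) / \<theta>))) \<longlongrightarrow> Lambda4 t) at_top)"
  using caseA caseB caseC caseD by blast

end
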